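(* Let $G$ be a finite simple graph that contains no induced subgraph isomorphic to a banner or to $C_5$, and let $A$ be an odd antihole of $G$ (an induced subgraph). Suppose some two vertices of $A$ belong to a co-triangle of $G$. Then there is a homogeneous set $H$ of $G$ such that $H$ contains all vertices of $A$ and no co-triangle of $G[H]$ contains two vertices of $A$.
   Context: A hole is a chordless (induced) cycle with at least four vertices; it is odd if it has an odd number of vertices. An antihole is the complement of a hole; an odd antihole is the complement of an odd hole. $C_5$ is the chordless cycle on five vertices. A banner is the graph consisting of a hole on four vertices together with one additional vertex adjacent to exactly one vertex of that hole. A co-triangle is a set of three pairwise non-adjacent vertices. For $X \subseteq V(G)$, $G[X]$ is the subgraph induced by $X$. A set $H \subseteq V(G)$ is homogeneous if $2 \leq |H| < |V(G)|$ and every vertex of $V(G)\setminus H$ is either adjacent to all vertices of $H$ or to no vertex of $H$. *)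

theory Defs
  imports Main
begin

text \<open>A finite simple graph: finite vertex set V and a symmetric, irreflexive
adjacency relation E (only its restriction to V matters).\<close>
definition simple_graph :: "'a set \<Rightarrow> ('a \<Rightarrow> 'a \<Rightarrow> bool) \<Rightarrow> bool" where
  "simple_graph V E \<longleftrightarrow> finite V \<and> (\<forall>x\<in>V. \<forall>y\<in>V. E x y \<longleftrightarrow> E y x) \<and> (\<forall>x\<in>V. \<not> E x x)"

definition induced_cycle :: "('a \<Rightarrow> 'a \<Rightarrow> bool) \<Rightarrow> 'a list \<Rightarrow> bool" where
  "induced_cycle E vs \<longleftrightarrow> distinct vs \<and>
     (\<forall>i<length vs. \<forall>j<length vs. i \<noteq> j \<longrightarrow>
        (E (vs!i) (vs!j) \<longleftrightarrow> (j = Suc i mod length vs \<or> i = Suc j mod length vs)))"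

definition hole :: "'a set \<Rightarrow> ('a \<Rightarrow> 'a \<Rightarrow> bool) \<Rightarrow> 'a set \<Rightarrow> bool" where
  "hole V E S \<longleftrightarrow> S \<subseteq> V \<and> (\<exists>vs. set vs = S \<and> length vs \<ge> 4 \<and> induced_cycle E vs)"

definition odd_hole :: "'a set \<Rightarrow> ('a \<Rightarrow> 'a \<Rightarrow> bool) \<Rightarrow> 'a set \<Rightarrow> bool" where
  "odd_hole V E S \<longleftrightarrow> hole V E S \<and> odd (card S)"

definition compl_adj :: "('a \<Rightarrow> 'a \<Rightarrow> bool) \<Rightarrow> 'a \<Rightarrow> 'a \<Rightarrow> bool" where
  "compl_adj E x y \<longleftrightarrow> x \<noteq> y \<and> \<not> E x y"

definition odd_antihole :: "'a set \<Rightarrow> ('a \<Rightarrow> 'a \<Rightarrow> bool) \<Rightarrow> 'a set \<Rightarrow> bool" where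
  "odd_antihole V E S \<longleftrightarrow> odd_hole V (compl_adj E) S"

definition has_induced_C5 :: "'a set \<Rightarrow> ('a \<Rightarrow> 'a \<Rightarrow> bool) \<Rightarrow> bool" where
  "has_induced_C5 V E \<longleftrightarrow> (\<exists>vs. set vs \<subseteq> V \<and> length vs = 5 \<and> induced_cycle E vs)"

definition has_induced_banner :: "'a set \<Rightarrow> ('a \<Rightarrow> 'a \<Rightarrow> bool) \<Rightarrow> bool" where
  "has_induced_banner V E \<longleftrightarrow> (\<exists>a b c d e. {a,b,c,d,e} \<subseteq> V \<and> e \<notin> {a,b,c,d} \<and>
     induced_cycle E [a,b,c,d] \<and> E e a \<and> \<not> E e b \<and> \<not> E e c \<and> \<not> E e d)"

definition co_triangle :: "'a set \<Rightarrow> ('a \<Rightarrow> 'a \<Rightarrow> bool) \<Rightarrow> 'a set \<Rightarrow> bool" where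
  "co_triangle V E T \<longleftrightarrow> T \<subseteq> V \<and> card T = 3 \<and> (\<forall>x\<in>T. \<forall>y\<in>T. \<not> E x y)"

definition homogeneous :: "'a set \<Rightarrow> ('a \<Rightarrow> 'a \<Rightarrow> bool) \<Rightarrow> 'a set \<Rightarrow> bool" where
  "homogeneous V E H \<longleftrightarrow> H \<subseteq> V \<and> 2 \<le> card H \<and> card H < card V \<and>
     (\<forall>v\<in>V - H. (\<forall>h\<in>H. E v h) \<or> (\<forall>h\<in>H. \<not> E v h))"

end

theory Submission
  imports Defs "HOL-Number_Theory.Cong"
begin


lemma sg_sym: "simple_graph V E \<Longrightarrow> x\<in>V \<Longrightarrow> y\<in>V \<Longrightarrow> E x y = E y x"
  unfolding simple_graph_def by blast

lemma sg_irr: "simple_graph V E \<Longrightarrow> x\<in>V \<Longrightarrow> \<not> E x x"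
  unfolding simple_graph_def by blast

lemma less4: "(i::nat) < 4 \<Longrightarrow> i = 0 \<or> i = 1 \<or> i = 2 \<or> i = 3" by auto
lemma less5: "(i::nat) < 5 \<Longrightarrow> i = 0 \<or> i = 1 \<or> i = 2 \<or> i = 3 \<or> i = 4" by auto

lemma banner_intro:
  assumes sg: "simple_graph V E" and V: "a\<in>V" "b\<in>V" "c\<in>V" "d\<in>V" "e\<in>V"
    and dist: "distinct [a,b,c,d,e]"
    and "E a b" "E b c" "E c d" "E d a" "\<not>E a c" "\<not>E b d" "E e a" "\<not>E e b" "\<not>E e c" "\<not>E e d"
  shows "has_induced_banner V E"
proof -
  have s: "E b a" "E c b" "E d c" "E a d" "\<not>E c a" "\<not>E d b"
    using assms sg_sym[OF sg] by metis+
  have "induced_cycle E [a,b,c,d]"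
    unfolding induced_cycle_def
  proof (intro conjI allI impI)
    show "distinct [a,b,c,d]" using dist by auto
    fix i j assume "i < length [a,b,c,d]" "j < length [a,b,c,d]" "i \<noteq> j"
    then have "i < 4" "j < 4" "i \<noteq> j" by auto
    then show "E ([a,b,c,d]!i) ([a,b,c,d]!j) = (j = Suc i mod length [a,b,c,d] \<or> i = Suc j mod length [a,b,c,d])"
      using less4[OF \<open>i<4\<close>] less4[OF \<open>j<4\<close>] s assms \<open>i \<noteq> j\<close> by (elim disjE) simp_all
  qed
  then show ?thesis unfolding has_induced_banner_def using assms by (intro exI[of _ a] exI[of _ b] exI[of _ c] exI[of _ d] exI[of _ e]) auto
qed

lemma c5_intro:
  assumes sg: "simple_graph V E" and V: "a\<in>V" "b\<in>V" "c\<in>V" "d\<in>V" "e\<in>V"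
    and dist: "distinct [a,b,c,d,e]"
    and "E a b" "E b c" "E c d" "E d e" "E e a" "\<not>E a c" "\<not>E a d" "\<not>E b d" "\<not>E b e" "\<not>E c e"
  shows "has_induced_C5 V E"
proof -
  have s: "E b a" "E c b" "E d c" "E e d" "E a e" "\<not>E c a" "\<not>E d a" "\<not>E d b" "\<not>E e b" "\<not>E e c"
    using assms sg_sym[OF sg] by metis+
  have "induced_cycle E [a,b,c,d,e]"
    unfolding induced_cycle_def
  proof (intro conjI allI impI)
    show "distinct [a,b,c,d,e]" using dist by auto
    fix i j assume "i < length [a,b,c,d,e]" "j < length [a,b,c,d,e]" "i \<noteq> j"
    then have "i < 5" "j < 5" "i \<noteq> j" by auto
    then show "E ([a,b,c,d,e]!i) ([a,b,c,d,e]!j) = (j = Suc i mod length [a,b,c,d,e] \<or> i = Suc j mod length [a,b,c,d,e])"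
      using less5[OF \<open>i<5\<close>] less5[OF \<open>j<5\<close>] s assms \<open>i \<noteq> j\<close> by (elim disjE) simp_all
  qed
  then show ?thesis unfolding has_induced_C5_def using assms by (intro exI[of _ "[a,b,c,d,e]"]) auto
qed



lemma modeq_add: "((t::nat) + x) mod n = (t + y) mod n \<longleftrightarrow> x mod n = y mod n"
  using cong_add_lcancel_nat[of t x y n] unfolding cong_def .

locale ah0 =
  fixes V :: "'a set" and E :: "'a \<Rightarrow> 'a \<Rightarrow> bool" and vs :: "'a list"
  assumes sg: "simple_graph V E"
    and ic: "induced_cycle (compl_adj E) vs"
    and sub: "set vs \<subseteq> V"
    and n3: "length vs \<ge> 3"
begin

definition a :: "nat \<Rightarrow> 'a" where "a i = vs ! (i mod length vs)"

lemma npos: "length vs > 0" using n3 by linarith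

lemma a_in: "a i \<in> set vs" unfolding a_def using npos by simp
lemma a_V: "a i \<in> V" using a_in sub by blast

lemma dist: "distinct vs" using ic unfolding induced_cycle_def by blast

lemma adj_idx: assumes "i < length vs" "j < length vs"
  shows "E (vs!i) (vs!j) \<longleftrightarrow> \<not> (i = j \<or> j = Suc i mod length vs \<or> i = Suc j mod length vs)"
proof (cases "i = j")
  case True
  have "vs!j \<in> V" using sub assms nth_mem by blast
  then show ?thesis using sg_irr[OF sg] True by auto
next
  case False
  then have ne: "vs!i \<noteq> vs!j" using dist assms by (simp add: nth_eq_iff_index_eq)
  have "compl_adj E (vs!i) (vs!j) \<longleftrightarrow> (j = Suc i mod length vs \<or> i = Suc j mod length vs)"
    using ic assms False unfolding induced_cycle_def by blast
  then show ?thesis using ne False unfolding compl_adj_def by auto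
qed

lemma a_eq: "a i = a j \<longleftrightarrow> i mod length vs = j mod length vs"
  unfolding a_def using dist npos by (simp add: nth_eq_iff_index_eq)

lemma adj_a: "E (a i) (a j) \<longleftrightarrow> \<not> (i mod length vs = j mod length vs \<or> j mod length vs = Suc i mod length vs \<or> i mod length vs = Suc j mod length vs)"
  unfolding a_def using adj_idx[of "i mod length vs" "j mod length vs"] npos
  by (simp add: mod_Suc_eq)

lemma adj_off: assumes "c < length vs" "d < length vs"
  shows "E (a (t+c)) (a (t+d)) \<longleftrightarrow> \<not> (c = d \<or> (c+1) mod length vs = d \<or> (d+1) mod length vs = c)"
proof -
  have 1: "(t+c) mod length vs = (t+d) mod length vs \<longleftrightarrow> c = d" using modeq_add assms by simp
  have 2: "(t+d) mod length vs = Suc (t+c) mod length vs \<longleftrightarrow> (c+1) mod length vs = d"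
    using modeq_add[of t d "length vs" "c+1"] assms by (auto simp: mod_Suc_eq)
  have 3: "(t+c) mod length vs = Suc (t+d) mod length vs \<longleftrightarrow> (d+1) mod length vs = c"
    using modeq_add[of t c "length vs" "d+1"] assms by (auto simp: mod_Suc_eq)
  show ?thesis using adj_a[of "t+c" "t+d"] 1 2 3 by (simp add: mod_Suc_eq)
qed

lemma a_eq_off: "c < length vs \<Longrightarrow> d < length vs \<Longrightarrow> a (t+c) = a (t+d) \<longleftrightarrow> c = d"
  using a_eq modeq_add by simp

lemma a_surj: assumes "x \<in> set vs" shows "\<exists>c < length vs. x = a (t + c)"
proof -
  obtain j where j: "j < length vs" "x = vs!j" using assms by (metis in_set_conv_nth)
  define c where "c = (j + length vs - t mod length vs) mod length vs"
  have "(t + c) mod length vs = j"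
    unfolding c_def using j npos
    by (smt (verit) add.commute add_diff_inverse_nat le_add2 less_imp_le_nat mod_add_left_eq mod_add_self2 mod_less mod_less_divisor not_le order_less_le_trans)
  then have "x = a (t+c)" unfolding a_def using j by simp
  moreover have "c < length vs" unfolding c_def using npos by simp
  ultimately show ?thesis by blast
qed

lemma nonadj_consec: assumes "x \<in> set vs" "y \<in> set vs" "x \<noteq> y" "\<not> E x y"
  shows "\<exists>t. (x = a t \<and> y = a (t+1)) \<or> (y = a t \<and> x = a (t+1))"
proof -
  obtain i j where ij: "i < length vs" "j < length vs" "x = vs!i" "y = vs!j" using assms by (metis in_set_conv_nth)
  then have "i \<noteq> j" using assms by auto
  then have "j = Suc i mod length vs \<or> i = Suc j mod length vs" using adj_idx ij assms by auto
  moreover have "a i = x" "a j = y" unfolding a_def using ij by auto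
  ultimately show ?thesis unfolding a_def by (metis Suc_eq_plus1 mod_Suc_eq mod_mod_trivial)
qed

end


locale ah = ah0 +
  assumes n7: "length vs \<ge> 7" and nodd: "odd (length vs)"
    and nb: "\<not> has_induced_banner V E" and nc: "\<not> has_induced_C5 V E"
begin

lemma adj_small: "c \<le> 5 \<Longrightarrow> d \<le> 5 \<Longrightarrow> E (a(t+c)) (a(t+d)) \<longleftrightarrow> \<not>(c=d \<or> c+1=d \<or> d+1=c)"
  using adj_off[of c d t] n7 by simp

lemma ne_small: "c \<le> 5 \<Longrightarrow> d \<le> 5 \<Longrightarrow> a(t+c) = a(t+d) \<longleftrightarrow> c = d"
  using a_eq_off[of c d t] n7 by simp

lemma symV: "x \<in> V \<Longrightarrow> y \<in> V \<Longrightarrow> E x y = E y x" using sg_sym[OF sg] by blast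

lemma step4:
  assumes yV: "y \<in> V" and yA: "y \<notin> set vs" and n0: "\<not> E y (a t)" and n1: "\<not> E y (a (t+1))"
  shows "\<not> E y (a (t+2))"
proof
  assume y2: "E y (a (t+2))"
  define p where "p c = a (t+c)" for c
  have A: "\<And>c d. c\<le>5 \<Longrightarrow> d\<le>5 \<Longrightarrow> E (p c) (p d) = (\<not>(c=d \<or> c+1=d \<or> d+1=c))"
    unfolding p_def by (rule adj_small)
  have N: "\<And>c d. c\<le>5 \<Longrightarrow> d\<le>5 \<Longrightarrow> (p c = p d) = (c = d)"
    unfolding p_def by (rule ne_small)
  have pV: "\<And>c. p c \<in> V" unfolding p_def by (rule a_V)
  have yp: "\<And>c. y \<noteq> p c" "\<And>c. p c \<noteq> y" unfolding p_def using a_in yA by metis+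
  have S: "\<And>c. E (p c) y = E y (p c)" using symV pV yV by blast
  have h0: "\<not> E y (p 0)" "\<not> E y (p 1)" "E y (p 2)" using n0 n1 y2 unfolding p_def by simp_all
  show False
  proof (cases "E y (p 3)")
    case True
    show False using nb banner_intro[OF sg, of "p 3" y "p 2" "p 0" "p 1"] A N pV yV yp S h0 True by simp
  next
    case False
    have h4: "\<not> E y (p 4)"
    proof
      assume "E y (p 4)"
      then show False using nb banner_intro[OF sg, of "p 4" "p 1" "p 3" "p 0" y] A N pV yV yp S h0 False by simp
    qed
    have h5: "\<not> E y (p 5)"
    proof
      assume "E y (p 5)"
      then show False using nb banner_intro[OF sg, of "p 5" "p 1" "p 4" "p 0" y] A N pV yV yp S h0 h4 by simp
    qed
    show False using nb banner_intro[OF sg, of "p 2" "p 4" "p 1" "p 5" y] A N pV yV yp S h0 h4 h5 by simp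
  qed
qed

lemma lem4_all:
  assumes yV: "y \<in> V" and yA: "y \<notin> set vs" and n0: "\<not> E y (a t)" and n1: "\<not> E y (a (t+1))"
    and x: "x \<in> set vs"
  shows "\<not> E y x"
proof -
  have "\<not> E y (a (t+m)) \<and> \<not> E y (a (t+m+1))" for m
  proof (induction m)
    case 0 then show ?case using n0 n1 by simp
  next
    case (Suc m)
    then have "\<not> E y (a (t+m+2))" using step4[OF yV yA, of "t+m"] by (simp add: add.assoc)
    then show ?case using Suc by (simp add: add.assoc)
  qed
  moreover obtain c where "x = a (t+c)" using a_surj[OF x] by blast
  ultimately show ?thesis by blast
qed

lemma parity:
  assumes "Q (a t)" and st: "\<And>s. Q (a s) \<Longrightarrow> Q (a (s+2))"
  shows "Q (a (t+1))"
proof -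
  have "Q (a (t + 2*m))" for m
  proof (induction m)
    case 0 then show ?case using assms by simp
  next
    case (Suc m) then show ?case using st[of "t+2*m"] by (simp add: add.assoc)
  qed
  moreover have "2 * ((length vs + 1) div 2) = length vs + 1" using nodd by presburger
  ultimately have "Q (a (t + (length vs + 1)))" by metis
  moreover have "a (t + (length vs + 1)) = a (t+1)" unfolding a_eq
    by (metis add.assoc add.commute mod_add_self2)
  ultimately show ?thesis by simp
qed

lemma complete_A:
  assumes kV: "k \<in> V" and kA: "k \<notin> set vs" and zV: "z \<in> V" and zA: "z \<notin> set vs"
    and kz: "E k z" and za: "\<forall>x\<in>set vs. \<not> E z x" and kn: "\<exists>x\<in>set vs. E k x"
  shows "\<forall>x\<in>set vs. E k x"
proof (rule ccontr)
  assume "\<not> (\<forall>x\<in>set vs. E k x)"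
  then obtain x where x: "x \<in> set vs" "\<not> E k x" by blast
  then obtain t where t: "\<not> E k (a t)" using a_surj[OF x(1), of 0] by auto
  have zk: "z \<noteq> k" using kz sg_irr[OF sg] kV by blast
  have anti: False if "\<not> E k (a s)" "\<not> E k (a (s+1))" for s
    using lem4_all[OF kV kA that] kn by blast
  have stp: "\<not> E k (a (s+2))" if ns: "\<not> E k (a s)" for s
  proof
    assume k2: "E k (a (s+2))"
    define p where "p c = a (s+c)" for c
    have A: "\<And>c d. c\<le>5 \<Longrightarrow> d\<le>5 \<Longrightarrow> E (p c) (p d) = (\<not>(c=d \<or> c+1=d \<or> d+1=c))"
      unfolding p_def by (rule adj_small)
    have N: "\<And>c d. c\<le>5 \<Longrightarrow> d\<le>5 \<Longrightarrow> (p c = p d) = (c = d)"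
      unfolding p_def by (rule ne_small)
    have pV: "\<And>c. p c \<in> V" unfolding p_def by (rule a_V)
    have kp: "\<And>c. k \<noteq> p c" "\<And>c. p c \<noteq> k" "\<And>c. z \<noteq> p c" "\<And>c. p c \<noteq> z"
      unfolding p_def using a_in kA zA by metis+
    have S: "\<And>c. E (p c) k = E k (p c)" "\<And>c. E (p c) z = E z (p c)" "E z k"
      using symV pV kV zV kz by blast+
    have zp: "\<And>c. \<not> E z (p c)" unfolding p_def using za a_in by blast
    have h0: "\<not> E k (p 0)" "E k (p 1)" "E k (p 2)" using ns k2 anti[of s] unfolding p_def by auto
    show False
    proof (cases "E k (p 3)")
      case True
      show False using nb banner_intro[OF sg, of k "p 2" "p 0" "p 3" z] A N pV kV zV kp S zp zk h0 True by simp
    next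
      case False
      show False using nc c5_intro[OF sg, of k "p 1" "p 3" "p 0" "p 2"] A N pV kV kp S h0 False by simp
    qed
  qed
  have "\<not> E k (a (t+1))" using parity[of "\<lambda>v. \<not> E k v", OF t] stp by blast
  then show False using anti t by blast
qed

lemma nbr_complete:
  assumes kV: "k \<in> V" and kA: "k \<notin> set vs" and zV: "z \<in> V" and zA: "z \<notin> set vs"
    and kz: "E k z" and za: "\<forall>x\<in>set vs. \<not> E z x" and kc: "\<forall>x\<in>set vs. E k x"
    and hV: "h \<in> V" and hA: "h \<notin> set vs" and hk: "h \<noteq> k" and hz: "h \<noteq> z"
    and hn: "\<exists>x\<in>set vs. E h x" and nhz: "\<not> E h z"
  shows "E k h"
proof (rule ccontr)
  assume nkh: "\<not> E k h"
  have anti: False if "\<not> E h (a s)" "\<not> E h (a (s+1))" for s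
    using lem4_all[OF hV hA that] hn by blast
  have "\<exists>q. E h (a q) \<and> E h (a (q+1))"
  proof (rule ccontr)
    assume nq: "\<not> (\<exists>q. E h (a q) \<and> E h (a (q+1)))"
    obtain x where x: "x \<in> set vs" "E h x" using hn by blast
    then obtain t where t: "E h (a t)" using a_surj[OF x(1), of 0] by auto
    have "E h (a (s+2))" if "E h (a s)" for s
      using that nq anti[of "s+1"] by (metis add.assoc one_add_one)
    then have "E h (a (t+1))" using parity[of "\<lambda>v. E h v", OF t] by blast
    then show False using nq t by blast
  qed
  then obtain q where q: "E h (a q)" "E h (a (q+1))" by blast
  have zk: "z \<noteq> k" using kz sg_irr[OF sg] kV by blast
  define p where "p c = a (q+c)" for c
  have A: "\<And>c d. c\<le>5 \<Longrightarrow> d\<le>5 \<Longrightarrow> E (p c) (p d) = (\<not>(c=d \<or> c+1=d \<or> d+1=c))"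
    unfolding p_def by (rule adj_small)
  have N: "\<And>c d. c\<le>5 \<Longrightarrow> d\<le>5 \<Longrightarrow> (p c = p d) = (c = d)"
    unfolding p_def by (rule ne_small)
  have pV: "\<And>c. p c \<in> V" unfolding p_def by (rule a_V)
  have kp: "\<And>c. k \<noteq> p c" "\<And>c. p c \<noteq> k" "\<And>c. z \<noteq> p c" "\<And>c. p c \<noteq> z" "\<And>c. h \<noteq> p c" "\<And>c. p c \<noteq> h"
    unfolding p_def using a_in kA zA hA by metis+
  have S: "\<And>c. E (p c) k = E k (p c)" "\<And>c. E (p c) h = E h (p c)" "\<And>c. E (p c) z = E z (p c)" "E z k" "\<not> E z h"
    using symV pV kV zV hV kz nhz by blast+
  have zp: "\<And>c. \<not> E z (p c)" unfolding p_def using za a_in by blast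
  have kp2: "\<And>c. E k (p c)" unfolding p_def using kc a_in by blast
  have h0: "E h (p 0)" "E h (p 1)" using q unfolding p_def by auto
  show False using nb banner_intro[OF sg, of k "p 0" h "p 1" z] A N pV kV zV hV kp S zp zk hk hz h0 kp2 nkh by simp
qed

lemma no_cotri_A:
  assumes "x \<in> set vs" "y \<in> set vs" "w \<in> set vs" "x \<noteq> y" "w \<noteq> x" "w \<noteq> y"
    "\<not> E x y" "\<not> E w x" "\<not> E w y"
  shows False
proof -
  obtain t where t: "(x = a t \<and> y = a (t+1)) \<or> (y = a t \<and> x = a (t+1))"
    using nonadj_consec assms by blast
  then have w01: "\<not> E (a (t+0)) w" "\<not> E (a (t+1)) w" "w \<noteq> a (t+0)" "w \<noteq> a (t+1)"
    using assms symV sub a_V by auto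
  obtain c where c: "c < length vs" "w = a (t+c)" using a_surj[OF assms(3)] by blast
  have c01: "c \<noteq> 0" "c \<noteq> 1"
  proof -
    show "c \<noteq> 0" proof assume "c = 0" then show False using w01 c by simp qed
    show "c \<noteq> 1" proof assume "c = 1" then show False using w01 c by simp qed
  qed
  have m0: "(c+1) mod length vs = 0" using adj_off[of 0 c t] c w01 c01 n7 npos by auto
  have m1: "c = 2 \<or> (c+1) mod length vs = 1" using adj_off[of 1 c t] c w01 c01 n7 npos by auto
  have e: "c + 1 = length vs"
  proof (rule ccontr)
    assume "c + 1 \<noteq> length vs"
    then have "c + 1 < length vs" using c by simp
    then show False using m0 by simp
  qed
  show False using m1 e n7 by auto
qed

end


lemma two_elems: assumes "2 \<le> card S" shows "\<exists>x y. x \<in> S \<and> y \<in> S \<and> x \<noteq> y"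
proof (rule ccontr)
  assume na: "\<not> ?thesis"
  have "S \<noteq> {}" using assms by auto
  then obtain x where x: "x \<in> S" by blast
  then have "S \<subseteq> {x}" using na by blast
  then have "card S \<le> 1" using card_mono[of "{x}" S] by simp
  then show False using assms by simp
qed

lemma third_elem: assumes "card T = 3" shows "\<exists>w\<in>T. w \<noteq> x \<and> w \<noteq> y"
proof (rule ccontr)
  assume "\<not> ?thesis"
  then have "T \<subseteq> {x,y}" by blast
  then have "card T \<le> card {x,y}" using card_mono[of "{x,y}" T] by simp
  also have "\<dots> \<le> 2" by (simp add: card_insert_le_m1)
  finally show False using assms by simp
qed

theorem lemma3:
  fixes V :: "'a set" and E :: "'a \<Rightarrow> 'a \<Rightarrow> bool" and A :: "'a set"
  assumes "simple_graph V E"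
    and "\<not> has_induced_banner V E"
    and "\<not> has_induced_C5 V E"
    and "odd_antihole V E A"
    and "\<exists>T. co_triangle V E T \<and> card (T \<inter> A) \<ge> 2"
  shows "\<exists>H. homogeneous V E H \<and> A \<subseteq> H \<and>
           (\<forall>T. co_triangle H E T \<longrightarrow> card (T \<inter> A) < 2)"
proof -
  from assms(4) obtain vs where A: "A \<subseteq> V" "set vs = A" "length vs \<ge> 4" "induced_cycle (compl_adj E) vs"
    and oddA: "odd (card A)"
    unfolding odd_antihole_def odd_hole_def hole_def by blast
  interpret ah0 V E vs using assms(1) A by unfold_locales auto
  have oddn: "odd (length vs)" using oddA A(2) dist distinct_card by metis
  have n7: "length vs \<ge> 7"
  proof -
    have "length vs \<noteq> 5"
    proof
      assume n5: "length vs = 5"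
      have Ei: "\<And>i j. i<5 \<Longrightarrow> j<5 \<Longrightarrow> E (vs!i) (vs!j) = (\<not>(i=j \<or> j = Suc i mod 5 \<or> i = Suc j mod 5))"
        using adj_idx n5 by simp
      have D: "\<And>i j. i<5 \<Longrightarrow> j<5 \<Longrightarrow> (vs!i = vs!j) = (i=j)" using dist n5 nth_eq_iff_index_eq by metis
      have Vv: "\<And>i. i<5 \<Longrightarrow> vs!i \<in> V" using sub n5 nth_mem by (metis subsetD)
      show False using assms(3) c5_intro[OF assms(1), of "vs!0" "vs!2" "vs!4" "vs!1" "vs!3"] Ei D Vv by simp
    qed
    then show ?thesis using oddn A(3) by presburger
  qed
  interpret ah V E vs using n7 oddn assms(2,3) by unfold_locales auto
  define Z where "Z = {x\<in>V. x \<notin> A \<and> (\<forall>y\<in>A. \<not> E x y)}"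
  define K where "K = {x\<in>V. x \<notin> Z \<and> (\<exists>z\<in>Z. E x z)}"
  define H where "H = V - Z - K"
  have finV: "finite V" using assms(1) unfolding simple_graph_def by blast
  have claim: "\<exists>w\<in>T. w \<in> Z" if T: "co_triangle V E T" "card (T \<inter> A) \<ge> 2" for T
  proof -
    have TV: "T \<subseteq> V" and c3: "card T = 3" and ind: "\<forall>x\<in>T. \<forall>y\<in>T. \<not> E x y"
      using T(1) unfolding co_triangle_def by auto
    obtain x y where xy: "x \<in> T \<inter> A" "y \<in> T \<inter> A" "x \<noteq> y" using two_elems[OF T(2)] by blast
    obtain w where w: "w \<in> T" "w \<noteq> x" "w \<noteq> y" using third_elem[OF c3] by blast
    have ne: "\<not> E x y" "\<not> E w x" "\<not> E w y" using ind xy w by auto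
    have wA: "w \<notin> A"
    proof
      assume "w \<in> A"
      then show False using no_cotri_A[of x y w] xy w ne A(2) by auto
    qed
    obtain t where t: "(x = a t \<and> y = a (t+1)) \<or> (y = a t \<and> x = a (t+1))"
      using nonadj_consec[of x y] xy ne A(2) by auto
    then have "\<not> E w (a t)" "\<not> E w (a (t+1))" using ne by auto
    then have "\<forall>v\<in>A. \<not> E w v" using lem4_all[of w t] w TV wA A(2) by auto
    then show ?thesis using w wA TV unfolding Z_def by blast
  qed
  obtain z0 where z0: "z0 \<in> Z" using claim assms(5) by blast
  have HV: "H \<subseteq> V" unfolding H_def by blast
  have AH: "A \<subseteq> H"
  proof
    fix x assume x: "x \<in> A"
    have "x \<notin> Z" using x unfolding Z_def by blast
    moreover have "x \<notin> K"
    proof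
      assume "x \<in> K"
      then obtain z where "z \<in> Z" "E x z" unfolding K_def by blast
      then show False using x symV A(1) unfolding Z_def by blast
    qed
    ultimately show "x \<in> H" using x A(1) unfolding H_def by blast
  qed
  have cardA: "card A = length vs" using A(2) dist distinct_card by metis
  have c2: "2 \<le> card H" using card_mono[OF finite_subset[OF HV finV] AH] cardA n7 by simp
  have c3: "card H < card V"
  proof -
    have "H \<subset> V" using HV z0 unfolding H_def Z_def by blast
    then show ?thesis using psubset_card_mono finV by blast
  qed
  have hom: "\<forall>v\<in>V - H. (\<forall>h\<in>H. E v h) \<or> (\<forall>h\<in>H. \<not> E v h)"
  proof
    fix v assume v: "v \<in> V - H"
    then have "v \<in> Z \<or> v \<in> K" unfolding H_def by blast
    then show "(\<forall>h\<in>H. E v h) \<or> (\<forall>h\<in>H. \<not> E v h)"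
    proof
      assume vZ: "v \<in> Z"
      have "\<not> E v h" if h: "h \<in> H" for h
      proof
        assume "E v h"
        then have "E h v" using symV v h HV by blast
        then have "h \<in> K" using h vZ HV unfolding H_def K_def by blast
        then show False using h unfolding H_def by blast
      qed
      then show ?thesis by blast
    next
      assume vK: "v \<in> K"
      then obtain z where z: "z \<in> Z" "E v z" and vV: "v \<in> V" and vZ: "v \<notin> Z" unfolding K_def by blast
      have zV: "z \<in> V" and zA: "z \<notin> A" and za: "\<forall>y\<in>A. \<not> E z y" using z unfolding Z_def by auto
      have vA: "v \<notin> A" using z za symV vV zV by blast
      have vn: "\<exists>y\<in>A. E v y" using vV vA vZ unfolding Z_def by blast
      have vc: "\<forall>x\<in>A. E v x" using complete_A[of v z] vV vA zV zA z za vn A(2) by auto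
      have "E v h" if h: "h \<in> H" for h
      proof (cases "h \<in> A")
        case True then show ?thesis using vc by blast
      next
        case False
        have hV: "h \<in> V" and hZ: "h \<notin> Z" and hK: "h \<notin> K" using h unfolding H_def by auto
        have hn: "\<exists>y\<in>A. E h y" using hV hZ False unfolding Z_def by blast
        have nhz: "\<not> E h z" using hV hZ hK z unfolding K_def by blast
        have "h \<noteq> v" using hK vK by blast
        moreover have "h \<noteq> z" using hZ z by blast
        ultimately show ?thesis
          using nbr_complete[of v z h] vV vA zV zA z za vc hV False hn nhz A(2) by auto
      qed
      then show ?thesis by blast
    qed
  qed
  have cot: "\<forall>T. co_triangle H E T \<longrightarrow> card (T \<inter> A) < 2"
  proof (intro allI impI)
    fix T assume T: "co_triangle H E T"
    show "card (T \<inter> A) < 2"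
    proof (rule ccontr)
      assume "\<not> card (T \<inter> A) < 2"
      moreover have "co_triangle V E T" using T HV unfolding co_triangle_def by blast
      ultimately obtain w where "w \<in> T" "w \<in> Z" using claim by force
      then show False using T unfolding co_triangle_def H_def by blast
    qed
  qed
  show ?thesis
    using HV c2 c3 hom AH cot unfolding homogeneous_def by blast
qed


end
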